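(* Let $R$ be an integral domain with field of fractions $K$, and let $U\in R^{m\times n}$ have rank $n$ over $K$ (so $n\le m$). Then $\mathrm{coker}(U)\cong R^{m-n}$ if and only if $\mathrm{coker}(UU^t)\cong R^{m-n}$.
   Context: For a matrix $B\in R^{m\times k}$, $\mathrm{coker}(B)=R^m/\mathrm{im}(B:R^k\to R^m)$; $U^t$ is the transpose. *)

theory Defs
  imports "Jordan_Normal_Form.DL_Rank" "HOL-Computational_Algebra.Fraction_Field"
begin

definition to_fract_mat :: "'a::idom mat \<Rightarrow> 'a fract mat" where
  "to_fract_mat U = map_mat (\<lambda>x. Fract x 1) U"

text \<open>By the first isomorphism theorem this holds iff there is an R-linear surjection
  R^m -> R^r (every R-linear map R^m -> R^r is given by an r x m matrix A)
  whose kernel is exactly im(B).\<close>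
definition coker_iso_free :: "'a::comm_ring_1 mat \<Rightarrow> nat \<Rightarrow> bool" where
  "coker_iso_free B r \<longleftrightarrow>
     (\<exists>A \<in> carrier_mat r (dim_row B).
        (\<forall>y \<in> carrier_vec r. \<exists>x \<in> carrier_vec (dim_row B). A *\<^sub>v x = y) \<and>
        {x \<in> carrier_vec (dim_row B). A *\<^sub>v x = 0\<^sub>v r}
          = {B *\<^sub>v z | z. z \<in> carrier_vec (dim_col B)})"

end

theory Submission
  imports Defs
begin

lemma (in vec_space) full_rank_inj:
  assumes A: "A \<in> carrier_mat n nc" and r: "rank A = nc"
    and v: "v \<in> carrier_vec nc" and Av: "A *\<^sub>v v = 0\<^sub>v n"
  shows "v = 0\<^sub>v nc"
proof (rule ccontr)
  assume nz: "v \<noteq> 0\<^sub>v nc"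
  have d: "distinct (cols A)"
  proof (rule ccontr)
    assume nd: "\<not> distinct (cols A)"
    obtain S where "maximal S (\<lambda>T. T \<subseteq> set (cols A) \<and> lin_indpt T)"
      using maximal_exists[of "(\<lambda>T. T \<subseteq> set (cols A) \<and> lin_indpt T)" "card (set (cols A))" "{}"]
      by (meson List.finite_set card_mono empty_iff empty_subsetI finite_lin_indpt2 rev_finite_subset)
    moreover then have "card S \<le> card (set (cols A))" by (simp add: card_mono maximal_def)
    then have "card S < nc"
      using A cols_length card_length nd card_distinct carrier_matD(2) nat_less_le
      by (metis dual_order.antisym dual_order.trans)
    ultimately show False using rank_card_indpt[OF A] r by simp
  qed
  have "lin_indpt (set (cols A))" using full_rank_lin_indpt[OF A r d] .
  moreover have "lin_dep (set (cols A))" using lin_depI[OF A v nz Av d] .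
  ultimately show False by simp
qed

lemma fract_eq0: "(Fract (a::'a::idom) 1 = 0) = (a = 0)"
  unfolding Zero_fract_def by (subst eq_fract(1)) simp_all

lemma fract_hom: "semiring_hom (\<lambda>x::'a::idom. Fract x 1)"
  by unfold_locales (simp_all add: One_fract_def fract_eq0)

lemma inj_R:
  fixes U :: "'a::idom mat"
  assumes U: "U \<in> carrier_mat m n"
    and r: "vec_space.rank m (to_fract_mat U) = n"
    and z: "z \<in> carrier_vec n" and Uz: "U *\<^sub>v z = 0\<^sub>v m"
  shows "z = 0\<^sub>v n"
proof -
  interpret h: semiring_hom "\<lambda>x::'a. Fract x 1" by (rule fract_hom)
  have "to_fract_mat U *\<^sub>v map_vec (\<lambda>x. Fract x 1) z = map_vec (\<lambda>x. Fract x 1) (U *\<^sub>v z)"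
    unfolding to_fract_mat_def using h.mult_mat_vec_hom[OF U z] by simp
  also have "\<dots> = 0\<^sub>v m" unfolding Uz by (rule h.vec_hom_zero)
  finally have "map_vec (\<lambda>x. Fract x 1) z = 0\<^sub>v n"
    using vec_space.full_rank_inj[of "to_fract_mat U" m n] U r z unfolding to_fract_mat_def by auto
  then show ?thesis using z by (auto simp: vec_eq_iff fract_eq0)
qed

lemma zero_mat_vec[simp]: "v \<in> carrier_vec k \<Longrightarrow> 0\<^sub>m m k *\<^sub>v v = (0\<^sub>v m :: 'a::semiring_0 vec)"
  by (rule eq_vecI) auto

lemma entry_unit:
  fixes M :: "'a::semiring_1 mat"
  assumes M: "M \<in> carrier_mat r k" and i: "i < r" and j: "j < k"
  shows "(M *\<^sub>v unit_vec k j) $ i = M $$ (i,j)"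
  using M i j by (simp add: scalar_prod_right_unit)

lemma zero_from_vec:
  fixes A B :: "'a::comm_ring_1 mat"
  assumes A: "A \<in> carrier_mat r m" and B: "B \<in> carrier_mat m k"
    and h: "\<And>z. z \<in> carrier_vec k \<Longrightarrow> A *\<^sub>v (B *\<^sub>v z) = 0\<^sub>v r"
  shows "A * B = 0\<^sub>m r k"
proof (rule eq_matI)
  fix i j assume i: "i < dim_row (0\<^sub>m r k :: 'a mat)" and j: "j < dim_col (0\<^sub>m r k :: 'a mat)"
  have "(A * B) $$ (i,j) = ((A * B) *\<^sub>v unit_vec k j) $ i"
    using A B i j by (subst entry_unit[of _ r k]) auto
  also have "\<dots> = (A *\<^sub>v (B *\<^sub>v unit_vec k j)) $ i" using A B by simp
  also have "\<dots> = 0" using h[of "unit_vec k j"] i by simp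
  finally show "(A * B) $$ (i,j) = 0\<^sub>m r k $$ (i,j)" using i j by simp
qed (use A B in auto)

lemma inj_mat:
  fixes U :: "'a::idom mat"
  assumes U: "U \<in> carrier_mat m n"
    and r: "vec_space.rank m (to_fract_mat U) = n"
    and X: "X \<in> carrier_mat n k" and UX: "U * X = 0\<^sub>m m k"
  shows "X = 0\<^sub>m n k"
proof (rule eq_matI)
  fix i j assume i: "i < dim_row (0\<^sub>m n k :: 'a mat)" and j: "j < dim_col (0\<^sub>m n k :: 'a mat)"
  have "U *\<^sub>v (X *\<^sub>v unit_vec k j) = (U * X) *\<^sub>v unit_vec k j" using U X by simp
  also have "\<dots> = 0\<^sub>v m" unfolding UX by (rule zero_mat_vec) simp
  finally have "X *\<^sub>v unit_vec k j = 0\<^sub>v n" using inj_R[OF U r] X by auto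
  then have "(X *\<^sub>v unit_vec k j) $ i = 0" using i by simp
  then show "X $$ (i,j) = 0\<^sub>m n k $$ (i,j)" using X i j by simp
qed (use X in auto)

lemma inj_mat2:
  fixes U :: "'a::idom mat"
  assumes U: "U \<in> carrier_mat m n"
    and r: "vec_space.rank m (to_fract_mat U) = n"
    and X: "X \<in> carrier_mat n k" and Y: "Y \<in> carrier_mat n k" and UX: "U * X = U * Y"
  shows "X = Y"
proof -
  have "U * (X - Y) = U * X - U * Y" using U X Y by (simp add: mult_minus_distrib_mat)
  also have "\<dots> = 0\<^sub>m m k" unfolding UX using U Y by simp
  moreover have "X - Y \<in> carrier_mat n k" using X Y by auto
  ultimately have "X - Y = 0\<^sub>m n k" using inj_mat[OF U r, of "X - Y" k] by simp
  then show ?thesis using X Y by (intro eq_matI) (auto simp: mat_eq_iff)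
qed

lemma coker_cong:
  assumes "dim_row B = dim_row C"
    and "{B *\<^sub>v z | z. z \<in> carrier_vec (dim_col B)} = {C *\<^sub>v z | z. z \<in> carrier_vec (dim_col C)}"
  shows "coker_iso_free B r = coker_iso_free C r"
  using assms unfolding coker_iso_free_def by simp

theorem proposition8p3:
  fixes U :: "'a::idom mat" and m n :: nat
  assumes "U \<in> carrier_mat m n"
    and "vec_space.rank m (to_fract_mat U) = n"
  shows "coker_iso_free U (m - n) \<longleftrightarrow> coker_iso_free (U * transpose_mat U) (m - n)"
proof -
  note U = assms(1) and r = assms(2)
  define Ut where "Ut = transpose_mat U"
  have Ut: "Ut \<in> carrier_mat n m" using U unfolding Ut_def by auto
  have UUt: "U * Ut \<in> carrier_mat m m" using U Ut by auto
  define IU where "IU = {U *\<^sub>v z | z. z \<in> carrier_vec n}"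
  define IV where "IV = {(U * Ut) *\<^sub>v z | z. z \<in> carrier_vec m}"
  have sub: "IV \<subseteq> IU"
  proof
    fix y assume "y \<in> IV"
    then obtain w where w: "w \<in> carrier_vec m" "y = (U * Ut) *\<^sub>v w" unfolding IV_def by auto
    then have "y = U *\<^sub>v (Ut *\<^sub>v w)" using U Ut by simp
    moreover have "Ut *\<^sub>v w \<in> carrier_vec n" using Ut w by simp
    ultimately show "y \<in> IU" unfolding IU_def by blast
  qed
  have eq: "coker_iso_free U (m - n) = coker_iso_free (U * Ut) (m - n)" if "IU \<subseteq> IV"
    by (rule coker_cong) (use that sub U Ut in \<open>auto simp: IU_def IV_def\<close>)
  have bwd: "IU \<subseteq> IV" if c: "coker_iso_free (U * Ut) (m - n)"
  proof -
    from c obtain A where A: "A \<in> carrier_mat (m - n) m"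
      and ker: "{x \<in> carrier_vec m. A *\<^sub>v x = 0\<^sub>v (m - n)} = IV"
      using c[unfolded coker_iso_free_def] unfolding IV_def
      using carrier_matD[OF UUt] by force
    have "A * (U * Ut) = 0\<^sub>m (m - n) m"
    proof (rule zero_from_vec[OF A UUt])
      fix z :: "'a vec" assume "z \<in> carrier_vec m"
      then have "(U * Ut) *\<^sub>v z \<in> IV" unfolding IV_def by blast
      then show "A *\<^sub>v ((U * Ut) *\<^sub>v z) = 0\<^sub>v (m - n)" unfolding ker[symmetric] by blast
    qed
    then have "(A * U) * Ut = 0\<^sub>m (m - n) m" using A U Ut by simp
    then have "transpose_mat ((A * U) * Ut) = 0\<^sub>m m (m - n)" by simp
    moreover have "transpose_mat ((A * U) * Ut) = transpose_mat Ut * transpose_mat (A * U)"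
      by (rule transpose_mult) (use A U Ut in auto)
    ultimately have "U * transpose_mat (A * U) = 0\<^sub>m m (m - n)"
      unfolding Ut_def by simp
    then have "transpose_mat (A * U) = 0\<^sub>m n (m - n)"
      using inj_mat[OF U r, of "transpose_mat (A * U)" "m - n"] A U by auto
    then have AU: "A * U = 0\<^sub>m (m - n) n"
      by (metis transpose_transpose zero_transpose_mat)
    show ?thesis
    proof
      fix y assume "y \<in> IU"
      then obtain z where z: "z \<in> carrier_vec n" "y = U *\<^sub>v z" unfolding IU_def by auto
      have "A *\<^sub>v y = (A * U) *\<^sub>v z" using z A U by simp
      also have "\<dots> = 0\<^sub>v (m - n)" unfolding AU using z by simp
      finally show "y \<in> IV" unfolding ker[symmetric] using z U by auto
    qed
  qed
  have fwd: "IU \<subseteq> IV" if c: "coker_iso_free U (m - n)"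
  proof -
    from c obtain A where A: "A \<in> carrier_mat (m - n) m"
      and surj: "\<forall>y \<in> carrier_vec (m - n). \<exists>x \<in> carrier_vec m. A *\<^sub>v x = y"
      and ker: "{x \<in> carrier_vec m. A *\<^sub>v x = 0\<^sub>v (m - n)} = IU"
      using c[unfolded coker_iso_free_def] unfolding IU_def
      using carrier_matD[OF U] by force
    define s where "s j = (SOME x. x \<in> carrier_vec m \<and> A *\<^sub>v x = unit_vec (m - n) j)" for j
    have s: "s j \<in> carrier_vec m \<and> A *\<^sub>v s j = unit_vec (m - n) j" for j
      unfolding s_def by (rule someI_ex) (use surj in auto)
    define S where "S = mat m (m - n) (\<lambda>(i,j). s j $ i)"
    have S: "S \<in> carrier_mat m (m - n)" unfolding S_def by simp
    have colS: "col S j = s j" if "j < m - n" for j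
      using that s[of j] unfolding S_def by (auto simp: vec_eq_iff)
    have AS: "A * S = 1\<^sub>m (m - n)"
    proof (rule eq_matI)
      fix i j assume i: "i < dim_row (1\<^sub>m (m - n) :: 'a mat)" and j: "j < dim_col (1\<^sub>m (m - n) :: 'a mat)"
      have "(A * S) $$ (i, j) = (col (A * S) j) $ i" using A S i j by simp
      also have "\<dots> = (A *\<^sub>v s j) $ i" using A S i j colS by simp
      also have "\<dots> = 1\<^sub>m (m - n) $$ (i, j)" using s[of j] i j by simp
      finally show "(A * S) $$ (i, j) = 1\<^sub>m (m - n) $$ (i, j)" .
    qed (use A S in auto)
    define P where "P = 1\<^sub>m m - S * A"
    have P: "P \<in> carrier_mat m m" unfolding P_def using S A by auto
    have "A * P = A * 1\<^sub>m m - A * (S * A)" unfolding P_def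
      by (rule mult_minus_distrib_mat[of A "m - n" m]) (use A S in auto)
    also have "\<dots> = A - (A * S) * A" using A S by simp
    also have "\<dots> = 0\<^sub>m (m - n) m" unfolding AS using A by simp
    finally have AP: "A * P = 0\<^sub>m (m - n) m" .
    have colP: "col P j \<in> IU" if "j < m" for j
    proof -
      have "A *\<^sub>v col P j = col (A * P) j" by (rule col_mult2[symmetric, OF A P that])
      also have "\<dots> = 0\<^sub>v (m - n)" unfolding AP using that by simp
      finally show ?thesis unfolding ker[symmetric] using P that by auto
    qed
    define l where "l j = (SOME z. z \<in> carrier_vec n \<and> U *\<^sub>v z = col P j)" for j
    have l: "l j \<in> carrier_vec n \<and> U *\<^sub>v l j = col P j" if "j < m" for j
      unfolding l_def by (rule someI_ex) (use colP[OF that] in \<open>auto simp: IU_def\<close>)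
    define L where "L = mat n m (\<lambda>(k,j). l j $ k)"
    have L: "L \<in> carrier_mat n m" unfolding L_def by simp
    have UL: "U * L = P"
    proof (rule eq_matI)
      fix i j assume i: "i < dim_row P" and j: "j < dim_col P"
      have colL: "col L j = l j" using j P l[of j] unfolding L_def by (auto simp: vec_eq_iff)
      have "(U * L) $$ (i, j) = (col (U * L) j) $ i" using U L P i j by simp
      also have "\<dots> = (U *\<^sub>v l j) $ i" using U L P i j colL by simp
      also have "\<dots> = P $$ (i, j)" using l[of j] P i j by simp
      finally show "(U * L) $$ (i, j) = P $$ (i, j)" .
    qed (use U L P in auto)
    have AU: "A * U = 0\<^sub>m (m - n) n"
    proof (rule zero_from_vec[OF A U])
      fix z :: "'a vec" assume "z \<in> carrier_vec n"
      then have "U *\<^sub>v z \<in> IU" unfolding IU_def by blast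
      then show "A *\<^sub>v (U *\<^sub>v z) = 0\<^sub>v (m - n)" unfolding ker[symmetric] by blast
    qed
    have "U * (L * U) = (U * L) * U" using U L by simp
    also have "\<dots> = 1\<^sub>m m * U - (S * A) * U" unfolding UL P_def
      by (rule minus_mult_distrib_mat[of _ m m]) (use U S A in auto)
    also have "\<dots> = U - S * (A * U)" using U S A by simp
    also have "\<dots> = U * 1\<^sub>m n" unfolding AU using U S by (auto intro!: eq_matI)
    finally have LU: "L * U = 1\<^sub>m n"
      by (rule inj_mat2[OF U r, where k = n, rotated 2]) (use L U in auto)
    have UtLt: "Ut * transpose_mat L = 1\<^sub>m n"
      using transpose_mult[OF L U] LU unfolding Ut_def by simp
    show ?thesis
    proof
      fix y assume "y \<in> IU"
      then obtain z where z: "z \<in> carrier_vec n" "y = U *\<^sub>v z" unfolding IU_def by auto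
      have Lt: "transpose_mat L \<in> carrier_mat m n" using L by simp
      have "y = U *\<^sub>v ((Ut * transpose_mat L) *\<^sub>v z)" unfolding UtLt using z by simp
      also have "\<dots> = (U * Ut) *\<^sub>v (transpose_mat L *\<^sub>v z)" using U Ut Lt z by simp
      finally show "y \<in> IV" unfolding IV_def using Lt z by auto
    qed
  qed
  show ?thesis unfolding Ut_def[symmetric] using eq fwd bwd by blast
qed

end
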